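(* Let $\mathfrak d=D(\mathfrak g,\mathfrak h)$ be a double extension (defined in the context), and suppose $\mathfrak h=\hat{\mathfrak h}\dotplus\check{\mathfrak h}$ as a vector space, where $\hat{\mathfrak h}$ is a Lie subalgebra of $\mathfrak h$. Choose bases $\{\hat H_{\hat\alpha}\}$ of $\hat{\mathfrak h}$ and $\{\check H_{\check\alpha}\}$ of $\check{\mathfrak h}$, and write the structure constants of $\mathfrak h$ and of its action on $\mathfrak g$ in this combined basis (so e.g. $f_{\hat\alpha\hat\beta}{}^{\check\gamma}=0$). Let $\{\hat H^{\hat\alpha},\check H^{\check\alpha}\}$ be the dual basis of $\mathfrak h^*$. Define the linear maps $T(\epsilon)$, $0<\epsilon\le 1$, on $\mathfrak d$ by $T(\epsilon)\check H_{\check\alpha}=\epsilon\,\check H_{\check\alpha}$, $T(\epsilon)\check H^{\check\alpha}=\epsilon^{-1}\check H^{\check\alpha}$, and $T(\epsilon)$ equal to the identity on $\mathfrak g$, on $\hat{\mathfrak h}$ and on $\operatorname{span}\{\hat H^{\hat\alpha}\}$. Then the limit $[x,y]_T=\lim_{\epsilon\to0}T(\epsilon)^{-1}[T(\epsilon)x,T(\epsilon)y]$ exists for all $x,y\in\mathfrak d$, and the contracted Lie algebra has the following nonzero brackets: $[G_i,G_j]=f_{ij}{}^kG_k+f_{\hat\alpha i}{}^k\Omega^{\mathfrak g}_{kj}\hat H^{\hat\alpha}$, $[\check H_{\check\alpha},\check H^{\check\beta}]=-f_{\check\alpha\hat\gamma}{}^{\check\beta}\hat H^{\hat\gamma}$,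 $[\hat H_{\hat\alpha},G_i]=f_{\hat\alpha i}{}^jG_j$, $[\hat H_{\hat\alpha},\check H_{\check\beta}]=f_{\hat\alpha\check\beta}{}^{\check\gamma}\check H_{\check\gamma}$, $[\hat H_{\hat\alpha},\check H^{\check\beta}]=-f_{\hat\alpha\check\gamma}{}^{\check\beta}\check H^{\check\gamma}$, $[\hat H_{\hat\alpha},\hat H_{\hat\beta}]=f_{\hat\alpha\hat\beta}{}^{\hat\gamma}\hat H_{\hat\gamma}$, $[\hat H_{\hat\alpha},\hat H^{\hat\beta}]=-f_{\hat\alpha\hat\gamma}{}^{\hat\beta}\hat H^{\hat\gamma}$ (in particular $[\check H_{\check\alpha},G_i]=0$ and $[\check H_{\check\alpha},\check H_{\check\beta}]=0$). Moreover, the symmetric bilinear form with nonzero entries $\langle G_i,G_j\rangle=\Omega^{\mathfrak g}_{ij}$, $\langle \hat H_{\hat\alpha},\hat H_{\hat\beta}\rangle=h_{\hat\alpha\hat\beta}$, $\langle\hat H_{\hat\alpha},\hat H^{\hat\beta}\rangle=\delta_{\hat\alpha}^{\hat\beta}$, $\langle\check H_{\check\alpha},\check H^{\check\beta}\rangle=\delta_{\check\alpha}^{\check\beta}$ (the $\epsilon\to0$ limit of the form $\langle T(\epsilon)x,T(\epsilon)y\rangle$) is an invariant metric on the contracted algebra, and the contracted algebra is a double extension $D(\mathfrak g\oplus D(0,\check{\mathfrak h}_T),\hat{\mathfrak h}_T)$, where $\check{\mathfrak h}_T$ is the abelian Lie algebra on the vector space $\check{\mathfrak h}$.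
   Context: An invariant metric on a real Lie algebra is a symmetric, nondegenerate bilinear form $\langle\cdot,\cdot\rangle$ with $\langle[Z,X],Y\rangle+\langle X,[Z,Y]\rangle=0$ for all $X,Y,Z$. Double extension (Medina–Revoy): let $\mathfrak g$ be a Lie algebra with basis $\{G_i\}$, brackets $[G_i,G_j]=f_{ij}{}^kG_k$ and invariant metric $\Omega^{\mathfrak g}_{ij}$; let $\mathfrak h$ be a Lie algebra with basis $\{H_\alpha\}$, $[H_\alpha,H_\beta]=f_{\alpha\beta}{}^\gamma H_\gamma$, acting on $\mathfrak g$ by derivations $H_\alpha\cdot G_i=f_{\alpha i}{}^jG_j$ that are antisymmetric with respect to $\Omega^{\mathfrak g}$ ($f_{\alpha i}{}^k\Omega^{\mathfrak g}_{kj}+f_{\alpha j}{}^k\Omega^{\mathfrak g}_{ki}=0$). Let $\{H^\alpha\}$ be the dual basis of $\mathfrak h^*$. The double extension $D(\mathfrak g,\mathfrak h)$ is the vector space $\mathfrak g\dotplus\mathfrak h\dotplus\mathfrak h^*$ with brackets $[G_i,G_j]=f_{ij}{}^kG_k+f_{\alpha i}{}^k\Omega^{\mathfrak g}_{kj}H^\alpha$, $[H_\alpha,G_i]=f_{\alpha i}{}^jG_j$, $[H_\alpha,H_\beta]=f_{\alpha\beta}{}^\gamma H_\gamma$, $[H_\alpha,H^\beta]=-f_{\alpha\gamma}{}^\beta H^\gamma$, $[H^\alpha,G_j]=[H^\alpha,H^\beta]=0$, and invariant metric $\langle G_i,G_j\rangle=\Omega^{\mathfrak g}_{ij}$, $\langle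 H_\alpha,H_\beta\rangle=h_{\alpha\beta}$, $\langle H_\alpha,H^\beta\rangle=\delta_\alpha^\beta$, all other entries zero, where $h_{\alpha\beta}$ is any (possibly degenerate) invariant symmetric bilinear form on $\mathfrak h$. $D(0,\mathfrak h)$ denotes the double extension of the trivial Lie algebra, i.e. $\mathfrak h^*\rtimes\mathfrak h$ with the coadjoint action. *)

theory Defs
  imports "HOL-Analysis.Analysis"
begin

text \<open>A finite-dimensional real Lie algebra with a chosen basis
indexed by a finite type 'l is given by structure constants c :: 'l => 'l => 'l => real,
[e_a, e_b] = sum_k c a b k e_k. Vectors are functions 'l => real (coordinates);
the product topology on 'l => real (Function_Topology) is the usual one.\<close>

definition br :: "('l::finite \<Rightarrow> 'l \<Rightarrow> 'l \<Rightarrow> real) \<Rightarrow> ('l \<Rightarrow> real) \<Rightarrow> ('l \<Rightarrow> real) \<Rightarrow> ('l \<Rightarrow> real)" where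
  "br c x y = (\<lambda>k. \<Sum>a\<in>UNIV. \<Sum>b\<in>UNIV. x a * y b * c a b k)"

definition bform :: "('l::finite \<Rightarrow> 'l \<Rightarrow> real) \<Rightarrow> ('l \<Rightarrow> real) \<Rightarrow> ('l \<Rightarrow> real) \<Rightarrow> real" where
  "bform B x y = (\<Sum>a\<in>UNIV. \<Sum>b\<in>UNIV. x a * B a b * y b)"

definition lie_sc :: "('l::finite \<Rightarrow> 'l \<Rightarrow> 'l \<Rightarrow> real) \<Rightarrow> bool" where
  "lie_sc c \<longleftrightarrow> (\<forall>a b k. c a b k = - c b a k) \<and>
     (\<forall>a b d m. (\<Sum>k\<in>UNIV. c a b k * c k d m + c b d k * c k a m + c d a k * c k b m) = 0)"

definition symmetric_form :: "('l \<Rightarrow> 'l \<Rightarrow> real) \<Rightarrow> bool" where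
  "symmetric_form B \<longleftrightarrow> (\<forall>a b. B a b = B b a)"

definition nondegenerate_form :: "('l::finite \<Rightarrow> 'l \<Rightarrow> real) \<Rightarrow> bool" where
  "nondegenerate_form B \<longleftrightarrow> (\<forall>x. (\<forall>y. bform B x y = 0) \<longrightarrow> x = (\<lambda>_. 0))"

definition invariant_form :: "('l::finite \<Rightarrow> 'l \<Rightarrow> 'l \<Rightarrow> real) \<Rightarrow> ('l \<Rightarrow> 'l \<Rightarrow> real) \<Rightarrow> bool" where
  "invariant_form c B \<longleftrightarrow> (\<forall>z x y. (\<Sum>k\<in>UNIV. c z x k * B k y) + (\<Sum>k\<in>UNIV. c z y k * B x k) = 0)"

definition invariant_metric :: "('l::finite \<Rightarrow> 'l \<Rightarrow> 'l \<Rightarrow> real) \<Rightarrow> ('l \<Rightarrow> 'l \<Rightarrow> real) \<Rightarrow> bool" where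
  "invariant_metric c B \<longleftrightarrow> symmetric_form B \<and> nondegenerate_form B \<and> invariant_form c B"

text \<open>Admissible data for a double extension D(g,h): (fg, Om) a metric Lie algebra,
fh a Lie algebra acting on g (H_a . G_i = sum_j fa a i j G_j) by Om-antisymmetric
derivations (a Lie algebra representation), and hf a symmetric invariant (possibly
degenerate) form on h.\<close>
definition dext_data ::
  "('i::finite \<Rightarrow> 'i \<Rightarrow> 'i \<Rightarrow> real) \<Rightarrow> ('i \<Rightarrow> 'i \<Rightarrow> real) \<Rightarrow>
   ('h::finite \<Rightarrow> 'h \<Rightarrow> 'h \<Rightarrow> real) \<Rightarrow> ('h \<Rightarrow> 'i \<Rightarrow> 'i \<Rightarrow> real) \<Rightarrow> ('h \<Rightarrow> 'h \<Rightarrow> real) \<Rightarrow> bool" where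
  "dext_data fg Om fh fa hf \<longleftrightarrow>
     lie_sc fg \<and> invariant_metric fg Om \<and> lie_sc fh \<and>
     (\<forall>a i j m. (\<Sum>k\<in>UNIV. fg i j k * fa a k m) =
                 (\<Sum>k\<in>UNIV. fa a i k * fg k j m) + (\<Sum>k\<in>UNIV. fa a j k * fg i k m)) \<and>
     (\<forall>a b i m. (\<Sum>g\<in>UNIV. fh a b g * fa g i m) =
                 (\<Sum>k\<in>UNIV. fa b i k * fa a k m) - (\<Sum>k\<in>UNIV. fa a i k * fa b k m)) \<and>
     (\<forall>a i j. (\<Sum>k\<in>UNIV. fa a i k * Om k j) + (\<Sum>k\<in>UNIV. fa a j k * Om k i) = 0) \<and>
     symmetric_form hf \<and> invariant_form fh hf"

text \<open>Double extension D(g,h). Basis labels: Inl i = G_i, Inr (Inl a) = H_a,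
Inr (Inr a) = H^a (dual basis).\<close>
definition dext_sc ::
  "('i::finite \<Rightarrow> 'i \<Rightarrow> 'i \<Rightarrow> real) \<Rightarrow> ('i \<Rightarrow> 'i \<Rightarrow> real) \<Rightarrow>
   ('h::finite \<Rightarrow> 'h \<Rightarrow> 'h \<Rightarrow> real) \<Rightarrow> ('h \<Rightarrow> 'i \<Rightarrow> 'i \<Rightarrow> real) \<Rightarrow>
   'i + ('h + 'h) \<Rightarrow> 'i + ('h + 'h) \<Rightarrow> 'i + ('h + 'h) \<Rightarrow> real" where
  "dext_sc fg Om fh fa x y z =
   (case (x, y, z) of
      (Inl i, Inl j, Inl k) \<Rightarrow> fg i j k
    | (Inl i, Inl j, Inr (Inr a)) \<Rightarrow> (\<Sum>k\<in>UNIV. fa a i k * Om k j)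
    | (Inr (Inl a), Inl i, Inl j) \<Rightarrow> fa a i j
    | (Inl i, Inr (Inl a), Inl j) \<Rightarrow> - fa a i j
    | (Inr (Inl a), Inr (Inl b), Inr (Inl g)) \<Rightarrow> fh a b g
    | (Inr (Inl a), Inr (Inr b), Inr (Inr g)) \<Rightarrow> - fh a g b
    | (Inr (Inr b), Inr (Inl a), Inr (Inr g)) \<Rightarrow> fh a g b
    | _ \<Rightarrow> 0)"

definition dext_metric ::
  "('i \<Rightarrow> 'i \<Rightarrow> real) \<Rightarrow> ('h \<Rightarrow> 'h \<Rightarrow> real) \<Rightarrow> 'i + ('h + 'h) \<Rightarrow> 'i + ('h + 'h) \<Rightarrow> real" where
  "dext_metric Om hf x y =
   (case (x, y) of
      (Inl i, Inl j) \<Rightarrow> Om i j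
    | (Inr (Inl a), Inr (Inl b)) \<Rightarrow> hf a b
    | (Inr (Inl a), Inr (Inr b)) \<Rightarrow> (if a = b then 1 else 0)
    | (Inr (Inr a), Inr (Inl b)) \<Rightarrow> (if a = b then 1 else 0)
    | _ \<Rightarrow> 0)"

text \<open>D(0,h) = h^* semidirect h with the coadjoint action (double extension of the trivial
Lie algebra). Labels: Inl a = H_a, Inr a = H^a.\<close>
definition dzero_sc :: "('h \<Rightarrow> 'h \<Rightarrow> 'h \<Rightarrow> real) \<Rightarrow> 'h + 'h \<Rightarrow> 'h + 'h \<Rightarrow> 'h + 'h \<Rightarrow> real" where
  "dzero_sc fh x y z =
   (case (x, y, z) of
      (Inl a, Inl b, Inl g) \<Rightarrow> fh a b g
    | (Inl a, Inr b, Inr g) \<Rightarrow> - fh a g b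
    | (Inr b, Inl a, Inr g) \<Rightarrow> fh a g b
    | _ \<Rightarrow> 0)"

definition dzero_metric :: "('h \<Rightarrow> 'h \<Rightarrow> real) \<Rightarrow> 'h + 'h \<Rightarrow> 'h + 'h \<Rightarrow> real" where
  "dzero_metric hf x y =
   (case (x, y) of
      (Inl a, Inl b) \<Rightarrow> hf a b
    | (Inl a, Inr b) \<Rightarrow> (if a = b then 1 else 0)
    | (Inr a, Inl b) \<Rightarrow> (if a = b then 1 else 0)
    | _ \<Rightarrow> 0)"

definition dsum_sc :: "('a \<Rightarrow> 'a \<Rightarrow> 'a \<Rightarrow> real) \<Rightarrow> ('b \<Rightarrow> 'b \<Rightarrow> 'b \<Rightarrow> real) \<Rightarrow> 'a + 'b \<Rightarrow> 'a + 'b \<Rightarrow> 'a + 'b \<Rightarrow> real" where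
  "dsum_sc c1 c2 x y z =
   (case (x, y, z) of
      (Inl a, Inl b, Inl d) \<Rightarrow> c1 a b d
    | (Inr a, Inr b, Inr d) \<Rightarrow> c2 a b d
    | _ \<Rightarrow> 0)"

definition dsum_metric :: "('a \<Rightarrow> 'a \<Rightarrow> real) \<Rightarrow> ('b \<Rightarrow> 'b \<Rightarrow> real) \<Rightarrow> 'a + 'b \<Rightarrow> 'a + 'b \<Rightarrow> real" where
  "dsum_metric B1 B2 x y =
   (case (x, y) of
      (Inl a, Inl b) \<Rightarrow> B1 a b
    | (Inr a, Inr b) \<Rightarrow> B2 a b
    | _ \<Rightarrow> 0)"

text \<open>Now h = hat h + check h with h-basis labelled by 'p + 'q: Inl p = hat H_p,
Inr q = check H_q. Labels of D(g,h): Inl i = G_i, Inr (Inl (Inl p)) = hat H_p,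
Inr (Inl (Inr q)) = check H_q, Inr (Inr (Inl p)) = hat H^p, Inr (Inr (Inr q)) = check H^q.\<close>
definition Tscale :: "real \<Rightarrow> 'i + (('p + 'q) + ('p + 'q)) \<Rightarrow> real" where
  "Tscale e l =
   (case l of
      Inr (Inl (Inr q)) \<Rightarrow> e
    | Inr (Inr (Inr q)) \<Rightarrow> inverse e
    | _ \<Rightarrow> 1)"

definition Tmap :: "real \<Rightarrow> ('i + (('p + 'q) + ('p + 'q)) \<Rightarrow> real) \<Rightarrow> ('i + (('p + 'q) + ('p + 'q)) \<Rightarrow> real)" where
  "Tmap e x = (\<lambda>l. Tscale e l * x l)"

definition Tinv :: "real \<Rightarrow> ('i + (('p + 'q) + ('p + 'q)) \<Rightarrow> real) \<Rightarrow> ('i + (('p + 'q) + ('p + 'q)) \<Rightarrow> real)" where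
  "Tinv e x = (\<lambda>l. x l / Tscale e l)"

definition contr_sc ::
  "('i::finite \<Rightarrow> 'i \<Rightarrow> 'i \<Rightarrow> real) \<Rightarrow> ('i \<Rightarrow> 'i \<Rightarrow> real) \<Rightarrow>
   ('p::finite + 'q::finite \<Rightarrow> 'p + 'q \<Rightarrow> 'p + 'q \<Rightarrow> real) \<Rightarrow> ('p + 'q \<Rightarrow> 'i \<Rightarrow> 'i \<Rightarrow> real) \<Rightarrow>
   'i + (('p + 'q) + ('p + 'q)) \<Rightarrow> 'i + (('p + 'q) + ('p + 'q)) \<Rightarrow> 'i + (('p + 'q) + ('p + 'q)) \<Rightarrow> real" where
  "contr_sc fg Om fh fa x y z =
   (case (x, y, z) of
    \<comment> \<open>[G_i,G_j] = f_ij^k G_k + f_{hat a i}^k Om_kj hat H^a\<close>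
      (Inl i, Inl j, Inl k) \<Rightarrow> fg i j k
    | (Inl i, Inl j, Inr (Inr (Inl a))) \<Rightarrow> (\<Sum>k\<in>UNIV. fa (Inl a) i k * Om k j)
    \<comment> \<open>[check H_a, check H^b] = - f_{check a, hat g}^{check b} hat H^g\<close>
    | (Inr (Inl (Inr a)), Inr (Inr (Inr b)), Inr (Inr (Inl g))) \<Rightarrow> - fh (Inr a) (Inl g) (Inr b)
    | (Inr (Inr (Inr b)), Inr (Inl (Inr a)), Inr (Inr (Inl g))) \<Rightarrow> fh (Inr a) (Inl g) (Inr b)
    \<comment> \<open>[hat H_a, G_i] = f_{hat a i}^j G_j\<close>
    | (Inr (Inl (Inl a)), Inl i, Inl j) \<Rightarrow> fa (Inl a) i j
    | (Inl i, Inr (Inl (Inl a)), Inl j) \<Rightarrow> - fa (Inl a) i j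
    \<comment> \<open>[hat H_a, check H_b] = f_{hat a check b}^{check g} check H_g\<close>
    | (Inr (Inl (Inl a)), Inr (Inl (Inr b)), Inr (Inl (Inr g))) \<Rightarrow> fh (Inl a) (Inr b) (Inr g)
    | (Inr (Inl (Inr b)), Inr (Inl (Inl a)), Inr (Inl (Inr g))) \<Rightarrow> - fh (Inl a) (Inr b) (Inr g)
    \<comment> \<open>[hat H_a, check H^b] = - f_{hat a check g}^{check b} check H^g\<close>
    | (Inr (Inl (Inl a)), Inr (Inr (Inr b)), Inr (Inr (Inr g))) \<Rightarrow> - fh (Inl a) (Inr g) (Inr b)
    | (Inr (Inr (Inr b)), Inr (Inl (Inl a)), Inr (Inr (Inr g))) \<Rightarrow> fh (Inl a) (Inr g) (Inr b)
    \<comment> \<open>[hat H_a, hat H_b] = f_{hat a hat b}^{hat g} hat H_g\<close>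
    | (Inr (Inl (Inl a)), Inr (Inl (Inl b)), Inr (Inl (Inl g))) \<Rightarrow> fh (Inl a) (Inl b) (Inl g)
    \<comment> \<open>[hat H_a, hat H^b] = - f_{hat a hat g}^{hat b} hat H^g\<close>
    | (Inr (Inl (Inl a)), Inr (Inr (Inl b)), Inr (Inr (Inl g))) \<Rightarrow> - fh (Inl a) (Inl g) (Inl b)
    | (Inr (Inr (Inl b)), Inr (Inl (Inl a)), Inr (Inr (Inl g))) \<Rightarrow> fh (Inl a) (Inl g) (Inl b)
    | _ \<Rightarrow> 0)"

definition contr_metric ::
  "('i \<Rightarrow> 'i \<Rightarrow> real) \<Rightarrow> ('p + 'q \<Rightarrow> 'p + 'q \<Rightarrow> real) \<Rightarrow>
   'i + (('p + 'q) + ('p + 'q)) \<Rightarrow> 'i + (('p + 'q) + ('p + 'q)) \<Rightarrow> real" where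
  "contr_metric Om hf x y =
   (case (x, y) of
      (Inl i, Inl j) \<Rightarrow> Om i j
    | (Inr (Inl (Inl a)), Inr (Inl (Inl b))) \<Rightarrow> hf (Inl a) (Inl b)
    | (Inr (Inl (Inl a)), Inr (Inr (Inl b))) \<Rightarrow> (if a = b then 1 else 0)
    | (Inr (Inr (Inl a)), Inr (Inl (Inl b))) \<Rightarrow> (if a = b then 1 else 0)
    | (Inr (Inl (Inr a)), Inr (Inr (Inr b))) \<Rightarrow> (if a = b then 1 else 0)
    | (Inr (Inr (Inr a)), Inr (Inl (Inr b))) \<Rightarrow> (if a = b then 1 else 0)
    | _ \<Rightarrow> 0)"

text \<open>Identification of the basis of D(g + D(0, check h_T), hat h_T), labelled by
('i + ('q + 'q)) + ('p + 'p), with the basis of the contracted algebra.\<close>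
definition relabel :: "('i + ('q + 'q)) + ('p + 'p) \<Rightarrow> 'i + (('p + 'q) + ('p + 'q))" where
  "relabel l =
   (case l of
      Inl (Inl i) \<Rightarrow> Inl i
    | Inl (Inr (Inl q)) \<Rightarrow> Inr (Inl (Inr q))
    | Inl (Inr (Inr q)) \<Rightarrow> Inr (Inr (Inr q))
    | Inr (Inl p) \<Rightarrow> Inr (Inl (Inl p))
    | Inr (Inr p) \<Rightarrow> Inr (Inr (Inl p)))"

end

theory Submission
  imports Defs
begin

lemma sum_UNIV_sum: "(\<Sum>k\<in>(UNIV::('a::finite+'b::finite) set). f k) = (\<Sum>k\<in>UNIV. f (Inl k)) + (\<Sum>k\<in>UNIV. f (Inr k))"
  by (subst UNIV_Plus_UNIV[symmetric], subst sum.Plus) auto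
lemma sd1[simp]: fixes f :: "'a::finite \<Rightarrow> real" shows "(\<Sum>k\<in>UNIV. f k * (if k = a then 1 else 0)) = (f a :: real)"
proof -
  have "(\<lambda>k. f k * (if k = a then 1 else 0)) = (\<lambda>k. if k = a then f k else 0)" by auto
  then show ?thesis by (simp only:) (simp add: sum.delta)
qed
lemma sd2[simp]: fixes f :: "'a::finite \<Rightarrow> real" shows "(\<Sum>k\<in>UNIV. f k * (if a = k then 1 else 0)) = (f a :: real)"
proof -
  have "(\<lambda>k. f k * (if a = k then 1 else 0)) = (\<lambda>k. if a = k then f k else 0)" by auto
  then show ?thesis by (simp only:) (simp add: sum.delta)
qed
lemma bform_delta: "bform B x (\<lambda>m. if m = l then 1 else 0) = (\<Sum>a\<in>UNIV. x a * B a l)"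
  unfolding bform_def by simp
lemma nd_from_cols:
  fixes B :: "'l::finite \<Rightarrow> 'l \<Rightarrow> real"
  assumes "\<And>x. (\<forall>l. (\<Sum>a\<in>UNIV. x a * B a l) = 0) \<Longrightarrow> x = (\<lambda>_. 0)"
  shows "nondegenerate_form B"
  unfolding nondegenerate_form_def
proof (intro allI impI)
  fix x assume "\<forall>y. bform B x y = 0"
  then have "\<forall>l. (\<Sum>a\<in>UNIV. x a * B a l) = 0"
    by (metis bform_delta)
  then show "x = (\<lambda>_. 0)" by (rule assms)
qed
lemma nd_cols:
  fixes B :: "'l::finite \<Rightarrow> 'l \<Rightarrow> real"
  assumes "nondegenerate_form B" "\<forall>l. (\<Sum>a\<in>UNIV. x a * B a l) = 0"
  shows "x = (\<lambda>_. 0)"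
proof -
  have "\<forall>y. bform B x y = 0"
  proof
    fix y
    have "bform B x y = (\<Sum>b\<in>UNIV. (\<Sum>a\<in>UNIV. x a * B a b) * y b)"
      unfolding bform_def by (subst sum.swap) (simp add: sum_distrib_right)
    then show "bform B x y = 0" using assms(2) by simp
  qed
  then show ?thesis using assms(1) unfolding nondegenerate_form_def by blast
qed
lemma L3: "(\<And>i. P (Inl i)) \<Longrightarrow> (\<And>a. P (Inr (Inl a))) \<Longrightarrow> (\<And>a. P (Inr (Inr a))) \<Longrightarrow> P x"
  by (metis sum.exhaust)

locale DE =
  fixes fg :: "'i::finite \<Rightarrow> 'i \<Rightarrow> 'i \<Rightarrow> real" and Om :: "'i \<Rightarrow> 'i \<Rightarrow> real"
    and fh :: "'h::finite \<Rightarrow> 'h \<Rightarrow> 'h \<Rightarrow> real" and fa :: "'h \<Rightarrow> 'i \<Rightarrow> 'i \<Rightarrow> real"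
    and hf :: "'h \<Rightarrow> 'h \<Rightarrow> real"
  assumes data: "dext_data fg Om fh fa hf"
begin

lemma F_lie: "lie_sc fg" using data by (simp add: dext_data_def)
lemma h_lie: "lie_sc fh" using data by (simp add: dext_data_def)
lemma Om_met: "invariant_metric fg Om" using data by (simp add: dext_data_def)
lemma F_anti: "fg a b k = - fg b a k" by (rule conjunct1[OF F_lie[unfolded lie_sc_def], rule_format])
lemma F_jac: "(\<Sum>k\<in>UNIV. fg a b k * fg k d m) + (\<Sum>k\<in>UNIV. fg b d k * fg k a m) + (\<Sum>k\<in>UNIV. fg d a k * fg k b m) = 0"
  using conjunct2[OF F_lie[unfolded lie_sc_def], rule_format, of a b d m] by (simp only: sum.distrib)
lemma h_anti: "fh a b k = - fh b a k" by (rule conjunct1[OF h_lie[unfolded lie_sc_def], rule_format])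
lemma h_jac: "(\<Sum>k\<in>UNIV. fh a b k * fh k d m) + (\<Sum>k\<in>UNIV. fh b d k * fh k a m) + (\<Sum>k\<in>UNIV. fh d a k * fh k b m) = 0"
  using conjunct2[OF h_lie[unfolded lie_sc_def], rule_format, of a b d m] by (simp only: sum.distrib)
lemma Om_sym: "Om a b = Om b a" using Om_met by (simp add: invariant_metric_def symmetric_form_def)
lemma Om_nd: "nondegenerate_form Om" using Om_met by (simp add: invariant_metric_def)
lemma Om_inv: "(\<Sum>k\<in>UNIV. fg z x k * Om k y) + (\<Sum>k\<in>UNIV. fg z y k * Om x k) = 0"
  using Om_met by (simp add: invariant_metric_def invariant_form_def)
lemma Der: "(\<Sum>k\<in>UNIV. fg i j k * fa a k m) =
                 (\<Sum>k\<in>UNIV. fa a i k * fg k j m) + (\<Sum>k\<in>UNIV. fa a j k * fg i k m)"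
  using data by (simp add: dext_data_def)
lemma Rep: "(\<Sum>g\<in>UNIV. fh a b g * fa g i m) =
                 (\<Sum>k\<in>UNIV. fa b i k * fa a k m) - (\<Sum>k\<in>UNIV. fa a i k * fa b k m)"
  using data by (simp add: dext_data_def)
lemma Anti: "(\<Sum>k\<in>UNIV. fa a i k * Om k j) + (\<Sum>k\<in>UNIV. fa a j k * Om k i) = 0"
  using data by (simp add: dext_data_def)
lemma hf_sym: "hf a b = hf b a" using data by (simp add: dext_data_def symmetric_form_def)
lemma hf_inv: "(\<Sum>k\<in>UNIV. fh z x k * hf k y) + (\<Sum>k\<in>UNIV. fh z y k * hf x k) = 0"
  using data by (simp add: dext_data_def invariant_form_def)

definition "W a i j = (\<Sum>k\<in>UNIV. fa a i k * Om k j)"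
lemma W_anti: "W a i j = - W a j i" using Anti[of a i j] by (simp add: W_def)

lemma W_swap: "(\<Sum>l\<in>UNIV. fa x p l * W y l q) = (\<Sum>k\<in>UNIV. fa y q k * W x k p)"
proof -
  have "(\<Sum>l\<in>UNIV. fa x p l * W y l q) = - (\<Sum>l\<in>UNIV. \<Sum>m\<in>UNIV. fa x p l * fa y q m * Om m l)"
    by (subst W_anti) (simp add: W_def sum_distrib_left sum_negf mult.assoc)
  also have "\<dots> = - (\<Sum>m\<in>UNIV. \<Sum>l\<in>UNIV. fa y q m * fa x p l * Om l m)"
    by (subst sum.swap) (intro sum.cong refl arg_cong[where f=uminus], simp add: mult_ac, metis Om_sym)
  also have "\<dots> = (\<Sum>k\<in>UNIV. fa y q k * W x k p)"
    by (subst W_anti) (simp add: W_def sum_distrib_left sum_negf mult.assoc)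
  finally show ?thesis .
qed

lemma RepW: "(\<Sum>g\<in>UNIV. fh x y g * W g i j) = (\<Sum>l\<in>UNIV. fa y i l * W x l j) - (\<Sum>l\<in>UNIV. fa x i l * W y l j)"
proof -
  have "(\<Sum>g\<in>UNIV. fh x y g * W g i j) = (\<Sum>k\<in>UNIV. (\<Sum>g\<in>UNIV. fh x y g * fa g i k) * Om k j)"
    by (simp add: W_def sum_distrib_left sum_distrib_right mult.assoc) (subst sum.swap, simp)
  also have "\<dots> = (\<Sum>k\<in>UNIV. ((\<Sum>l\<in>UNIV. fa y i l * fa x l k) - (\<Sum>l\<in>UNIV. fa x i l * fa y l k)) * Om k j)"
    by (simp add: Rep)
  also have "\<dots> = (\<Sum>l\<in>UNIV. fa y i l * W x l j) - (\<Sum>l\<in>UNIV. fa x i l * W y l j)"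
    by (simp add: W_def left_diff_distrib sum_subtractf sum_distrib_left sum_distrib_right mult.assoc)
       (subst (1 2) sum.swap, simp)
  finally show ?thesis .
qed

lemma mixed: "(\<Sum>k\<in>UNIV. W k q p * fh x y k) - (\<Sum>k\<in>UNIV. fa x p k * W y k q) + (\<Sum>k\<in>UNIV. fa x q k * W y k p) = 0"
proof -
  have "(\<Sum>k\<in>UNIV. W k q p * fh x y k) = (\<Sum>l\<in>UNIV. fa y q l * W x l p) - (\<Sum>l\<in>UNIV. fa x q l * W y l p)"
    using RepW[of x y q p] by (simp add: mult.commute)
  moreover have "(\<Sum>l\<in>UNIV. fa y q l * W x l p) = (\<Sum>k\<in>UNIV. fa x p k * W y k q)"
    by (rule W_swap)
  ultimately show ?thesis by simp
qed

definition "II u v z = (\<Sum>m\<in>UNIV. fg u v m * Om m z)"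
lemma II_anti1: "II u v z = - II v u z"
  by (simp add: II_def sum_negf[symmetric]) (metis F_anti mult_minus_left)
lemma II_anti2: "II u v z = - II u z v"
  using Om_inv[of u v z] by (simp add: II_def Om_sym[of v] eq_neg_iff_add_eq_0)
lemma II_cyc: "II u v z = II v z u"
  by (metis II_anti1 II_anti2 minus_minus)

definition "TT a x y z = (\<Sum>k\<in>UNIV. fa a x k * II k y z)"
definition "PP a x y z = (\<Sum>k\<in>UNIV. fg x y k * W a k z)"

lemma PP1: "PP a x y z = TT a x y z + TT a y z x"
proof -
  have "PP a x y z = (\<Sum>m\<in>UNIV. (\<Sum>k\<in>UNIV. fg x y k * fa a k m) * Om m z)"
    by (simp add: PP_def W_def sum_distrib_left sum_distrib_right mult.assoc) (subst sum.swap, simp)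
  also have "\<dots> = (\<Sum>m\<in>UNIV. ((\<Sum>k\<in>UNIV. fa a x k * fg k y m) + (\<Sum>k\<in>UNIV. fa a y k * fg x k m)) * Om m z)"
    by (simp add: Der)
  also have "\<dots> = TT a x y z + (\<Sum>k\<in>UNIV. fa a y k * II x k z)"
    by (simp add: TT_def II_def distrib_right sum.distrib sum_distrib_left sum_distrib_right mult.assoc)
       (subst (1 2) sum.swap, simp)
  also have "(\<Sum>k\<in>UNIV. fa a y k * II x k z) = TT a y z x"
    by (simp add: TT_def II_cyc[of x])
  finally show ?thesis .
qed

lemma PP2: "PP a x y z = - TT a z x y"
proof -
  have "PP a x y z = - (\<Sum>k\<in>UNIV. \<Sum>m\<in>UNIV. fg x y k * fa a z m * Om m k)"
    unfolding PP_def by (subst W_anti) (simp add: W_def sum_distrib_left sum_negf mult.assoc)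
  also have "\<dots> = - (\<Sum>m\<in>UNIV. fa a z m * II x y m)"
    by (subst sum.swap) (simp add: II_def sum_distrib_left mult_ac, intro sum.cong refl, simp add: mult_ac, metis Om_sym)
  also have "\<dots> = - TT a z x y"
    by (simp add: TT_def) (metis II_cyc)
  finally show ?thesis .
qed

lemma cocycle: "(\<Sum>k\<in>UNIV. fg x y k * W a k z) + (\<Sum>k\<in>UNIV. fg y z k * W a k x) + (\<Sum>k\<in>UNIV. fg z x k * W a k y) = 0"
proof -
  have "PP a x y z + PP a y z x + PP a z x y = 0"
    using PP1[of a x y z] PP1[of a y z x] PP1[of a z x y] PP2[of a x y z] PP2[of a y z x] PP2[of a z x y]
    by linarith
  then show ?thesis by (simp add: PP_def)
qed

lemma coad: "- (\<Sum>k\<in>UNIV. fh x y k * fh k u v) - (\<Sum>k\<in>UNIV. fh y k v * fh x u k) + (\<Sum>k\<in>UNIV. fh x k v * fh y u k) = 0"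
proof -
  have e2: "(\<Sum>k\<in>UNIV. fh x k v * fh y u k) = - (\<Sum>k\<in>UNIV. fh y u k * fh k x v)"
    by (subst h_anti[of x]) (simp add: sum_negf mult_ac)
  have e3: "(\<Sum>k\<in>UNIV. fh y k v * fh x u k) = (\<Sum>k\<in>UNIV. fh u x k * fh k y v)"
    by (subst h_anti[of y], subst h_anti[of x]) (simp add: mult_ac)
  show ?thesis using h_jac[of x y u v] e2 e3 by linarith
qed

lemma Der2: "(\<Sum>k\<in>UNIV. fg i j k * fa a k m) =
                 (\<Sum>k\<in>UNIV. fa a i k * fg k j m) - (\<Sum>k\<in>UNIV. fa a j k * fg k i m)"
  by (subst Der) (subst F_anti[of i], simp add: sum_negf)

lemma dext_lie: "lie_sc (dext_sc fg Om fh fa)"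
  unfolding lie_sc_def
proof (intro conjI allI)
  fix a b k show "dext_sc fg Om fh fa a b k = - dext_sc fg Om fh fa b a k"
    apply (induct a rule: L3; induct b rule: L3; induct k rule: L3)
    apply (simp_all add: dext_sc_def W_def[symmetric])
    apply (rule F_anti) apply (rule W_anti) apply (rule h_anti) done
next
  fix a b d m
  show "(\<Sum>k\<in>UNIV. dext_sc fg Om fh fa a b k * dext_sc fg Om fh fa k d m + dext_sc fg Om fh fa b d k * dext_sc fg Om fh fa k a m + dext_sc fg Om fh fa d a k * dext_sc fg Om fh fa k b m) = 0"
    apply (induct a rule: L3; induct b rule: L3; induct d rule: L3; induct m rule: L3)
    apply (simp_all add: sum_UNIV_sum dext_sc_def sum.distrib sum_negf W_def[symmetric])
    subgoal for i ia iaa iaaa using F_jac[of iaaa iaa ia i] by linarith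
    subgoal for a i ia iaa using cocycle[where x=iaa and y=ia and z=i and a=a] by linarith
    subgoal for i a ia iaa using Der2[where i=iaa and j=ia and m=i and a=a] by linarith
    subgoal for a aa i ia using mixed[where q=ia and p=i and x=aa and y=a] by linarith
    subgoal for i ia a iaa using Der2[where i=ia and j=iaa and a=a and m=i] by linarith
    subgoal for a i aa ia using mixed[where q=i and p=ia and x=aa and y=a] by linarith
    subgoal for i a aa ia using Rep[where a=aa and b=a and i=ia and m=i] by linarith
    subgoal for i ia iaa a using Der2[where i=iaa and j=ia and m=i and a=a] by linarith
    subgoal for a i ia aa using mixed[where q=ia and p=i and x=aa and y=a] by linarith
    subgoal for i a ia aa using Rep[where a=a and b=aa and i=ia and m=i] by linarith
    subgoal for i ia a aa using Rep[where a=aa and b=a and i=ia and m=i] by linarith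
    subgoal for a aa aaa aaaa using h_jac[where a=aaaa and b=aaa and d=aa and m=a] by linarith
    subgoal for a aa aaa aaaa using coad[where x=aaaa and y=aaa and u=a and v=aa] by linarith
    subgoal for a aa aaa aaaa using coad[where x=aa and y=aaaa and u=a and v=aaa] by linarith
    subgoal for a aa aaa aaaa using coad[where x=aaa and y=aa and u=a and v=aaaa] by linarith
    done
qed

lemma dext_inv: "invariant_form (dext_sc fg Om fh fa) (dext_metric Om hf)"
  unfolding invariant_form_def
proof (intro allI)
  fix z x y
  show "(\<Sum>k\<in>UNIV. dext_sc fg Om fh fa z x k * dext_metric Om hf k y) + (\<Sum>k\<in>UNIV. dext_sc fg Om fh fa z y k * dext_metric Om hf x k) = 0"
    apply (induct z rule: L3; induct x rule: L3; induct y rule: L3)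
    apply (simp_all add: sum_UNIV_sum dext_sc_def dext_metric_def sum.distrib sum_negf W_def[symmetric])
    apply (simp_all add: Om_inv hf_inv)
    subgoal for a i ia by (simp add: W_def Om_sym[of i])
    subgoal for i ia a using Anti[of a ia i] by (simp add: W_def Om_sym[of ia])
    subgoal for a aa aaa using h_anti[of aa a aaa] by simp
    done
qed

lemma dext_sym: "symmetric_form (dext_metric Om hf)"
  unfolding symmetric_form_def
proof (intro allI)
  fix a b show "dext_metric Om hf a b = dext_metric Om hf b a"
    by (induct a rule: L3; induct b rule: L3) (simp_all add: dext_metric_def Om_sym hf_sym)
qed

lemma dext_nd: "nondegenerate_form (dext_metric Om hf)"
proof (rule nd_from_cols)
  fix x :: "'i + ('h + 'h) \<Rightarrow> real"
  assume H: "\<forall>l. (\<Sum>a\<in>UNIV. x a * dext_metric Om hf a l) = 0"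
  have h1: "x (Inr (Inl b)) = 0" for b
    using H[rule_format, of "Inr (Inr b)"] by (simp add: sum_UNIV_sum dext_metric_def)
  have h2: "x (Inr (Inr b)) = 0" for b
    using H[rule_format, of "Inr (Inl b)"] by (simp add: sum_UNIV_sum dext_metric_def h1)
  have "(\<lambda>i. x (Inl i)) = (\<lambda>_. 0)"
  proof (rule nd_cols[OF Om_nd], intro allI)
    fix j show "(\<Sum>a\<in>UNIV. x (Inl a) * Om a j) = 0"
      using H[rule_format, of "Inl j"] by (simp add: sum_UNIV_sum dext_metric_def)
  qed
  then have h3: "x (Inl i) = 0" for i by (metis)
  show "x = (\<lambda>_. 0)"
  proof
    fix l show "x l = 0" by (induct l rule: L3) (simp_all add: h1 h2 h3)
  qed
qed

lemma dext_metric_ok: "invariant_metric (dext_sc fg Om fh fa) (dext_metric Om hf)"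
  unfolding invariant_metric_def using dext_sym dext_nd dext_inv by blast
end



lemma sum_bij: "bij r \<Longrightarrow> (\<Sum>k\<in>UNIV. f (r k)) = (\<Sum>k\<in>UNIV. f k)"
  by (rule sum.reindex_bij_betw) (simp add: bij_betw_def)

lemma transfer:
  fixes r :: "'a::finite \<Rightarrow> 'b::finite"
  assumes b: "bij r" and ec: "\<forall>a b c. c2 (r a) (r b) (r c) = c1 a b c"
    and eB: "\<forall>a b. B2 (r a) (r b) = B1 a b"
    and L: "lie_sc c1" and M: "invariant_metric c1 B1"
  shows "lie_sc c2 \<and> invariant_metric c2 B2"
proof -
  define s where "s = inv r"
  have rs: "r (s x) = x" for x using b by (simp add: s_def bij_def surj_f_inv_f)
  have bs: "bij s" using b by (simp add: s_def bij_imp_bij_inv)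
  have c2: "c2 x y z = c1 (s x) (s y) (s z)" for x y z using ec[rule_format, of "s x" "s y" "s z"] by (simp add: rs)
  have B2: "B2 x y = B1 (s x) (s y)" for x y using eB[rule_format, of "s x" "s y"] by (simp add: rs)
  have S: "(\<Sum>k\<in>UNIV. f (s k)) = (\<Sum>k\<in>(UNIV::'a set). f k)" for f :: "'a \<Rightarrow> real"
    by (rule sum_bij[OF bs])
  have lie: "lie_sc c2"
    unfolding lie_sc_def
  proof (intro conjI allI)
    fix a b k show "c2 a b k = - c2 b a k" using L unfolding lie_sc_def c2 by blast
  next
    fix a b d m
    have "(\<Sum>k\<in>UNIV. c2 a b k * c2 k d m + c2 b d k * c2 k a m + c2 d a k * c2 k b m)
        = (\<Sum>k\<in>UNIV. c1 (s a) (s b) (s k) * c1 (s k) (s d) (s m) + c1 (s b) (s d) (s k) * c1 (s k) (s a) (s m) + c1 (s d) (s a) (s k) * c1 (s k) (s b) (s m))"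
      by (simp add: c2)
    also have "\<dots> = (\<Sum>k\<in>UNIV. c1 (s a) (s b) k * c1 k (s d) (s m) + c1 (s b) (s d) k * c1 k (s a) (s m) + c1 (s d) (s a) k * c1 k (s b) (s m))"
      by (rule S)
    also have "\<dots> = 0" using L unfolding lie_sc_def by blast
    finally show "(\<Sum>k\<in>UNIV. c2 a b k * c2 k d m + c2 b d k * c2 k a m + c2 d a k * c2 k b m) = 0" .
  qed
  have sym: "symmetric_form B2" using M unfolding invariant_metric_def symmetric_form_def B2 by blast
  have inv: "invariant_form c2 B2"
    unfolding invariant_form_def
  proof (intro allI)
    fix z x y
    have "(\<Sum>k\<in>UNIV. c2 z x k * B2 k y) + (\<Sum>k\<in>UNIV. c2 z y k * B2 x k)
       = (\<Sum>k\<in>UNIV. c1 (s z) (s x) (s k) * B1 (s k) (s y)) + (\<Sum>k\<in>UNIV. c1 (s z) (s y) (s k) * B1 (s x) (s k))"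
      by (simp add: c2 B2)
    also have "\<dots> = (\<Sum>k\<in>UNIV. c1 (s z) (s x) k * B1 k (s y)) + (\<Sum>k\<in>UNIV. c1 (s z) (s y) k * B1 (s x) k)"
      by (simp add: S[of "\<lambda>k. c1 (s z) (s x) k * B1 k (s y)"] S[of "\<lambda>k. c1 (s z) (s y) k * B1 (s x) k"])
    also have "\<dots> = 0" using M unfolding invariant_metric_def invariant_form_def by blast
    finally show "(\<Sum>k\<in>UNIV. c2 z x k * B2 k y) + (\<Sum>k\<in>UNIV. c2 z y k * B2 x k) = 0" .
  qed
  have nd: "nondegenerate_form B2"
  proof (rule nd_from_cols)
    fix x :: "'b \<Rightarrow> real"
    assume H: "\<forall>l. (\<Sum>a\<in>UNIV. x a * B2 a l) = 0"
    have "(\<lambda>a. x (r a)) = (\<lambda>_. 0)"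
    proof (rule nd_cols)
      show "nondegenerate_form B1" using M by (simp add: invariant_metric_def)
      show "\<forall>l. (\<Sum>a\<in>UNIV. x (r a) * B1 a l) = 0"
      proof
        fix l
        have "(\<Sum>a\<in>UNIV. x (r a) * B1 a l) = (\<Sum>a\<in>UNIV. x (r a) * B2 (r a) (r l))" by (simp add: eB)
        also have "\<dots> = (\<Sum>a\<in>UNIV. x a * B2 a (r l))" by (rule sum_bij[OF b, of "\<lambda>a. x a * B2 a (r l)"])
        also have "\<dots> = 0" using H by blast
        finally show "(\<Sum>a\<in>UNIV. x (r a) * B1 a l) = 0" .
      qed
    qed
    then show "x = (\<lambda>_. 0)" by (metis rs)
  qed
  show ?thesis using lie sym inv nd by (simp add: invariant_metric_def)
qed



lemma dzero0: "dzero_sc (\<lambda>_ _ _. 0) = (\<lambda>_ _ _. 0)"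
  by (auto simp: fun_eq_iff dzero_sc_def split: sum.split)

lemma L2: "(\<And>i. P (Inl i)) \<Longrightarrow> (\<And>a. P (Inr a)) \<Longrightarrow> P x"
  by (metis sum.exhaust)

lemma lie_zero: "lie_sc (\<lambda>(_::'a::finite) (_::'a) (_::'a). 0::real)"
  by (simp add: lie_sc_def)

lemma lie_dsum:
  fixes c1 :: "'a::finite \<Rightarrow> 'a \<Rightarrow> 'a \<Rightarrow> real" and c2 :: "'b::finite \<Rightarrow> 'b \<Rightarrow> 'b \<Rightarrow> real"
  assumes "lie_sc c1" "lie_sc c2"
  shows "lie_sc (dsum_sc c1 c2)"
  unfolding lie_sc_def
proof (intro conjI allI)
  have a1: "c1 a b k = - c1 b a k" for a b k using assms(1) unfolding lie_sc_def by blast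
  have a2: "c2 a b k = - c2 b a k" for a b k using assms(2) unfolding lie_sc_def by blast
  fix a b k show "dsum_sc c1 c2 a b k = - dsum_sc c1 c2 b a k"
    apply (induct a rule: L2; induct b rule: L2; induct k rule: L2)
    apply (simp_all add: dsum_sc_def)
    apply (rule a1)
    apply (rule a2)
    done
next
  fix a b d m
  have j1: "(\<Sum>k\<in>UNIV. c1 a b k * c1 k d m + c1 b d k * c1 k a m + c1 d a k * c1 k b m) = 0" for a b d m
    using assms(1) unfolding lie_sc_def by blast
  have j2: "(\<Sum>k\<in>UNIV. c2 a b k * c2 k d m + c2 b d k * c2 k a m + c2 d a k * c2 k b m) = 0" for a b d m
    using assms(2) unfolding lie_sc_def by blast
  show "(\<Sum>k\<in>UNIV. dsum_sc c1 c2 a b k * dsum_sc c1 c2 k d m + dsum_sc c1 c2 b d k * dsum_sc c1 c2 k a m + dsum_sc c1 c2 d a k * dsum_sc c1 c2 k b m) = 0"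
    by (induct a rule: L2; induct b rule: L2; induct d rule: L2; induct m rule: L2)
       (simp_all add: sum_UNIV_sum dsum_sc_def j1 j2)
qed

lemma im_dsum:
  fixes c1 :: "'a::finite \<Rightarrow> 'a \<Rightarrow> 'a \<Rightarrow> real" and c2 :: "'b::finite \<Rightarrow> 'b \<Rightarrow> 'b \<Rightarrow> real"
  assumes m1: "invariant_metric c1 B1" and m2: "invariant_metric c2 B2"
  shows "invariant_metric (dsum_sc c1 c2) (dsum_metric B1 B2)"
proof -
  have s1: "B1 a b = B1 b a" for a b using m1 by (simp add: invariant_metric_def symmetric_form_def)
  have s2: "B2 a b = B2 b a" for a b using m2 by (simp add: invariant_metric_def symmetric_form_def)
  have i1: "(\<Sum>k\<in>UNIV. c1 z x k * B1 k y) + (\<Sum>k\<in>UNIV. c1 z y k * B1 x k) = 0" for z x y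
    using m1 by (simp add: invariant_metric_def invariant_form_def)
  have i2: "(\<Sum>k\<in>UNIV. c2 z x k * B2 k y) + (\<Sum>k\<in>UNIV. c2 z y k * B2 x k) = 0" for z x y
    using m2 by (simp add: invariant_metric_def invariant_form_def)
  have sym: "symmetric_form (dsum_metric B1 B2)"
    unfolding symmetric_form_def
  proof (intro allI)
    fix a b show "dsum_metric B1 B2 a b = dsum_metric B1 B2 b a"
      by (induct a rule: L2; induct b rule: L2) (simp_all add: dsum_metric_def s1 s2)
  qed
  have inv: "invariant_form (dsum_sc c1 c2) (dsum_metric B1 B2)"
    unfolding invariant_form_def
  proof (intro allI)
    fix z x y show "(\<Sum>k\<in>UNIV. dsum_sc c1 c2 z x k * dsum_metric B1 B2 k y) + (\<Sum>k\<in>UNIV. dsum_sc c1 c2 z y k * dsum_metric B1 B2 x k) = 0"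
      by (induct z rule: L2; induct x rule: L2; induct y rule: L2) (simp_all add: sum_UNIV_sum dsum_sc_def dsum_metric_def i1 i2)
  qed
  have nd: "nondegenerate_form (dsum_metric B1 B2)"
  proof (rule nd_from_cols)
    fix x :: "'a + 'b \<Rightarrow> real"
    assume H: "\<forall>l. (\<Sum>a\<in>UNIV. x a * dsum_metric B1 B2 a l) = 0"
    have "(\<lambda>i. x (Inl i)) = (\<lambda>_. 0)"
    proof (rule nd_cols)
      show "nondegenerate_form B1" using m1 by (simp add: invariant_metric_def)
      show "\<forall>l. (\<Sum>a\<in>UNIV. x (Inl a) * B1 a l) = 0"
      proof
        fix l show "(\<Sum>a\<in>UNIV. x (Inl a) * B1 a l) = 0"
          using H[rule_format, of "Inl l"] by (simp add: sum_UNIV_sum dsum_metric_def)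
      qed
    qed
    moreover have "(\<lambda>i. x (Inr i)) = (\<lambda>_. 0)"
    proof (rule nd_cols)
      show "nondegenerate_form B2" using m2 by (simp add: invariant_metric_def)
      show "\<forall>l. (\<Sum>a\<in>UNIV. x (Inr a) * B2 a l) = 0"
      proof
        fix l show "(\<Sum>a\<in>UNIV. x (Inr a) * B2 a l) = 0"
          using H[rule_format, of "Inr l"] by (simp add: sum_UNIV_sum dsum_metric_def)
      qed
    qed
    ultimately have h: "x (Inl i) = 0" "x (Inr j) = 0" for i j by (metis)+
    show "x = (\<lambda>_. 0)"
    proof fix l show "x l = 0" by (induct l rule: L2) (simp_all add: h) qed
  qed
  show ?thesis using sym inv nd by (simp add: invariant_metric_def)
qed

lemma im_dzero: "invariant_metric (\<lambda>(_::'q::finite+'q) (_::'q+'q) (_::'q+'q). 0::real) (dzero_metric (\<lambda>_ _. 0))"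
proof -
  have sym: "symmetric_form (dzero_metric (\<lambda>(_::'q) (_::'q). 0::real))"
    unfolding symmetric_form_def
  proof (intro allI)
    fix a b :: "'q+'q" show "dzero_metric (\<lambda>_ _. 0) a b = dzero_metric (\<lambda>_ _. 0) b a"
      by (induct a rule: L2; induct b rule: L2) (auto simp: dzero_metric_def)
  qed
  have nd: "nondegenerate_form (dzero_metric (\<lambda>(_::'q) (_::'q). 0::real))"
  proof (rule nd_from_cols)
    fix x :: "'q + 'q \<Rightarrow> real"
    assume H: "\<forall>l. (\<Sum>a\<in>UNIV. x a * dzero_metric (\<lambda>_ _. 0) a l) = 0"
    have h1: "x (Inl b) = 0" for b using H[rule_format, of "Inr b"] by (simp add: sum_UNIV_sum dzero_metric_def)
    have h2: "x (Inr b) = 0" for b using H[rule_format, of "Inl b"] by (simp add: sum_UNIV_sum dzero_metric_def)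
    show "x = (\<lambda>_. 0)"
    proof fix l show "x l = 0" by (induct l rule: L2) (simp_all add: h1 h2) qed
  qed
  show ?thesis using sym nd by (simp add: invariant_metric_def invariant_form_def)
qed



lemma exp0: "((\<lambda>x. exp x) \<longlongrightarrow> (0::real)) at_bot" using exp_at_bot by simp
lemma exp2: "((\<lambda>x. exp x * exp x) \<longlongrightarrow> (0::real)) at_bot" using tendsto_mult[OF exp0 exp0] by simp
lemma tminus0: "(f \<longlongrightarrow> 0) F \<Longrightarrow> ((\<lambda>x. - f x) \<longlongrightarrow> (0::real)) F" using tendsto_minus by fastforce
lemma ece: "((\<lambda>x. exp x * c * exp x) \<longlongrightarrow> (0::real)) at_bot"
  using tendsto_mult_right_zero[OF exp2, of c] by (simp add: mult_ac)
lemma via_exp: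
  fixes f :: "real \<Rightarrow> real"
  assumes "((\<lambda>x. f (exp x)) \<longlongrightarrow> l) at_bot"
  shows "(f \<longlongrightarrow> l) (at_right 0)"
proof -
  have "((\<lambda>x. f (exp (ln x))) \<longlongrightarrow> l) (at_right 0)"
    by (rule filterlim_compose[OF assms ln_at_0])
  moreover have "eventually (\<lambda>x. f (exp (ln x)) = f x) (at_right (0::real))"
    by (rule eventually_mono[OF eventually_at_right_less]) simp
  ultimately show ?thesis by (rule Lim_transform_eventually)
qed

lemma L5: "(\<And>i. P (Inl (Inl i))) \<Longrightarrow> (\<And>a. P (Inl (Inr (Inl a)))) \<Longrightarrow> (\<And>a. P (Inl (Inr (Inr a))))
   \<Longrightarrow> (\<And>a. P (Inr (Inl a))) \<Longrightarrow> (\<And>a. P (Inr (Inr a))) \<Longrightarrow> P x"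
  by (metis sum.exhaust)

lemma L5b: "(\<And>i. P (Inl i)) \<Longrightarrow> (\<And>a. P (Inr (Inl (Inl a)))) \<Longrightarrow> (\<And>a. P (Inr (Inl (Inr a))))
   \<Longrightarrow> (\<And>a. P (Inr (Inr (Inl a)))) \<Longrightarrow> (\<And>a. P (Inr (Inr (Inr a)))) \<Longrightarrow> P x"
  by (metis sum.exhaust)

definition fa2 :: "('p::finite + 'q::finite \<Rightarrow> 'p + 'q \<Rightarrow> 'p + 'q \<Rightarrow> real) \<Rightarrow> ('p + 'q \<Rightarrow> 'i \<Rightarrow> 'i \<Rightarrow> real) \<Rightarrow> 'p \<Rightarrow> 'i + ('q + 'q) \<Rightarrow> 'i + ('q + 'q) \<Rightarrow> real" where
  "fa2 fh fa p x y = (case (x, y) of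
      (Inl i, Inl j) \<Rightarrow> fa (Inl p) i j
    | (Inr (Inl q), Inr (Inl r)) \<Rightarrow> fh (Inl p) (Inr q) (Inr r)
    | (Inr (Inr q), Inr (Inr r)) \<Rightarrow> - fh (Inl p) (Inr r) (Inr q)
    | _ \<Rightarrow> 0)"

locale DE2 = DE fg Om fh fa hf
  for fg :: "'i::finite \<Rightarrow> 'i \<Rightarrow> 'i \<Rightarrow> real" and Om
    and fh :: "'p::finite + 'q::finite \<Rightarrow> 'p + 'q \<Rightarrow> 'p + 'q \<Rightarrow> real" and fa hf +
  assumes hat: "\<forall>a b c. fh (Inl a) (Inl b) (Inr c) = 0"
begin

lemma hat0[simp]: "fh (Inl a) (Inl b) (Inr c) = 0" using hat by blast
lemma hrl[simp]: "fh (Inr s) (Inl a) x = - fh (Inl a) (Inr s) x" by (rule h_anti)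

lemma rep_check: "(\<Sum>g\<in>UNIV. fh (Inl a) (Inl b) (Inl g) * fh (Inl g) (Inr q) (Inr r)) =
   (\<Sum>s\<in>UNIV. fh (Inl b) (Inr q) (Inr s) * fh (Inl a) (Inr s) (Inr r)) - (\<Sum>s\<in>UNIV. fh (Inl a) (Inr q) (Inr s) * fh (Inl b) (Inr s) (Inr r))"
  using h_jac[of "Inl a" "Inl b" "Inr q" "Inr r"] by (simp add: sum_UNIV_sum sum_negf)

lemma hlie: "lie_sc (\<lambda>a b c. fh (Inl a) (Inl b) (Inl c))"
  unfolding lie_sc_def
proof (intro conjI allI)
  fix a b k show "fh (Inl a) (Inl b) (Inl k) = - fh (Inl b) (Inl a) (Inl k)" by (rule h_anti)
next
  fix a b d m
  show "(\<Sum>k\<in>UNIV. fh (Inl a) (Inl b) (Inl k) * fh (Inl k) (Inl d) (Inl m) + fh (Inl b) (Inl d) (Inl k) * fh (Inl k) (Inl a) (Inl m) + fh (Inl d) (Inl a) (Inl k) * fh (Inl k) (Inl b) (Inl m)) = 0"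
    using h_jac[of "Inl a" "Inl b" "Inl d" "Inl m"] by (simp add: sum_UNIV_sum sum.distrib)
qed

lemma hinv: "invariant_form (\<lambda>a b c. fh (Inl a) (Inl b) (Inl c)) (\<lambda>a b. hf (Inl a) (Inl b))"
  unfolding invariant_form_def
proof (intro allI)
  fix z x y
  show "(\<Sum>k\<in>UNIV. fh (Inl z) (Inl x) (Inl k) * hf (Inl k) (Inl y)) + (\<Sum>k\<in>UNIV. fh (Inl z) (Inl y) (Inl k) * hf (Inl x) (Inl k)) = 0"
    using hf_inv[of "Inl z" "Inl x" "Inl y"] by (simp add: sum_UNIV_sum)
qed

abbreviation "fg2 \<equiv> dsum_sc fg (dzero_sc (\<lambda>(_::'q) (_::'q) (_::'q). 0::real))"
abbreviation "Om2 \<equiv> dsum_metric Om (dzero_metric (\<lambda>(_::'q) (_::'q). 0::real))"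

lemma der2: "(\<Sum>k\<in>UNIV. fg2 i j k * fa2 fh fa a k m) =
                 (\<Sum>k\<in>UNIV. fa2 fh fa a i k * fg2 k j m) + (\<Sum>k\<in>UNIV. fa2 fh fa a j k * fg2 i k m)"
  apply (induct i rule: L3; induct j rule: L3; induct m rule: L3)
  apply (simp_all add: sum_UNIV_sum dsum_sc_def dzero0 fa2_def Der)
  done

lemma rep2: "(\<Sum>g\<in>UNIV. fh (Inl a) (Inl b) (Inl g) * fa2 fh fa g i m) =
                 (\<Sum>k\<in>UNIV. fa2 fh fa b i k * fa2 fh fa a k m) - (\<Sum>k\<in>UNIV. fa2 fh fa a i k * fa2 fh fa b k m)"
  apply (induct i rule: L3; induct m rule: L3)
  apply (simp_all add: sum_UNIV_sum fa2_def)
  subgoal for i ia using Rep[of "Inl a" "Inl b" ia i] by (simp add: sum_UNIV_sum)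
  subgoal for aa aaa using rep_check[of a b aaa aa] by simp
  subgoal for aa aaa using rep_check[of a b aa aaa] by (simp add: sum_negf mult.commute)
  done

lemma anti2: "(\<Sum>k\<in>UNIV. fa2 fh fa a i k * Om2 k j) + (\<Sum>k\<in>UNIV. fa2 fh fa a j k * Om2 k i) = 0"
  apply (induct i rule: L3; induct j rule: L3)
  apply (simp_all add: sum_UNIV_sum fa2_def dsum_metric_def dzero_metric_def sum_negf)
  subgoal for i ia using Anti[of "Inl a" ia i] by simp
  done

lemma new_data: "dext_data fg2 Om2 (\<lambda>a b c. fh (Inl a) (Inl b) (Inl c)) (fa2 fh fa) (\<lambda>a b. hf (Inl a) (Inl b))"
  unfolding dext_data_def
proof (intro conjI allI)
  show "lie_sc fg2" by (simp add: dzero0 lie_dsum lie_zero F_lie)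
  show "invariant_metric fg2 Om2" by (simp add: dzero0 im_dsum im_dzero Om_met)
  show "lie_sc (\<lambda>a b c. fh (Inl a) (Inl b) (Inl c))" by (rule hlie)
  show "symmetric_form (\<lambda>a b. hf (Inl a) (Inl b))" by (simp add: symmetric_form_def hf_sym)
  show "invariant_form (\<lambda>a b c. fh (Inl a) (Inl b) (Inl c)) (\<lambda>a b. hf (Inl a) (Inl b))" by (rule hinv)
qed (rule der2 rep2 anti2)+

lemma relabel_sc: "contr_sc fg Om fh fa (relabel a) (relabel b) (relabel c) =
   dext_sc fg2 Om2 (\<lambda>a b c. fh (Inl a) (Inl b) (Inl c)) (fa2 fh fa) a b c"
  apply (induct a rule: L5; induct b rule: L5; induct c rule: L5)
  apply (simp_all add: relabel_def contr_sc_def dext_sc_def dsum_sc_def dzero0 fa2_def dsum_metric_def dzero_metric_def sum_UNIV_sum sum_negf)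
  done

lemma relabel_metric: "contr_metric Om hf (relabel a) (relabel b) =
   dext_metric Om2 (\<lambda>a b. hf (Inl a) (Inl b)) a b"
  apply (induct a rule: L5; induct b rule: L5)
  apply (simp_all add: relabel_def contr_metric_def dext_metric_def dsum_metric_def dzero_metric_def)
  done

lemma key_sc: "((\<lambda>e. Tscale e a * Tscale e b / Tscale e k * dext_sc fg Om fh fa a b k) \<longlongrightarrow> contr_sc fg Om fh fa a b k) (at_right 0)"
  apply (rule via_exp)
  apply (induct a rule: L5b; induct b rule: L5b; induct k rule: L5b)
  apply (simp_all add: Tscale_def dext_sc_def contr_sc_def)
  by (auto simp: divide_inverse intro!: tendsto_mult_left_zero tendsto_mult_right_zero tminus0 exp0 exp2 ece)

lemma key_m: "((\<lambda>e. Tscale e a * dext_metric Om hf a b * Tscale e b) \<longlongrightarrow> contr_metric Om hf a b) (at_right 0)"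
  apply (rule via_exp)
  apply (induct a rule: L5b; induct b rule: L5b)
  apply (simp_all add: Tscale_def dext_metric_def contr_metric_def)
  by (auto simp: divide_inverse intro!: tendsto_mult_left_zero tendsto_mult_right_zero tminus0 exp0 exp2 ece)
end



lemma tendsto_fun_iff:
  fixes f :: "'a \<Rightarrow> 'b \<Rightarrow> real"
  shows "(f \<longlongrightarrow> l) F \<longleftrightarrow> (\<forall>i. ((\<lambda>x. f x i) \<longlongrightarrow> l i) F)"
proof -
  have "(f \<longlongrightarrow> l) F \<longleftrightarrow> limitin (product_topology (\<lambda>i. euclidean) UNIV) f l F"
    by (simp add: euclidean_product_topology)
  also have "\<dots> \<longleftrightarrow> (\<forall>i. ((\<lambda>x. f x i) \<longlongrightarrow> l i) F)"
    by (simp add: limitin_componentwise)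
  finally show ?thesis .
qed

lemma Tinv_br: "Tinv e (br c (Tmap e x) (Tmap e y)) k =
   (\<Sum>a\<in>UNIV. \<Sum>b\<in>UNIV. x a * y b * (Tscale e a * Tscale e b / Tscale e k * c a b k))"
  unfolding Tinv_def br_def Tmap_def
  by (simp add: sum_divide_distrib mult_ac)

lemma bform_T: "bform B (Tmap e x) (Tmap e y) =
   (\<Sum>a\<in>UNIV. \<Sum>b\<in>UNIV. x a * y b * (Tscale e a * B a b * Tscale e b))"
  unfolding bform_def Tmap_def by (simp add: mult_ac)

lemma relabel_bij: "bij (relabel :: ('i + ('q + 'q)) + ('p + 'p) \<Rightarrow> 'i + (('p + 'q) + ('p + 'q)))"
proof -
  have ij: "a = b" if "relabel a = relabel b" for a b :: "('i + ('q + 'q)) + ('p + 'p)"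
    using that by (induct a rule: L5; induct b rule: L5) (simp_all add: relabel_def)
  have "inj (relabel :: ('i + ('q + 'q)) + ('p + 'p) \<Rightarrow> 'i + (('p + 'q) + ('p + 'q)))"
    by (rule injI) (rule ij)
  moreover have "surj (relabel :: ('i + ('q + 'q)) + ('p + 'p) \<Rightarrow> 'i + (('p + 'q) + ('p + 'q)))"
  proof -
    have "y \<in> range (relabel :: ('i + ('q + 'q)) + ('p + 'p) \<Rightarrow> 'i + (('p + 'q) + ('p + 'q)))" for y :: "'i + (('p + 'q) + ('p + 'q))"
    proof (induct y rule: L5b)
      case (1 i) show ?case by (rule range_eqI[of _ _ "Inl (Inl i)"]) (simp add: relabel_def)
    next
      case (2 a) show ?case by (rule range_eqI[of _ _ "Inr (Inl a)"]) (simp add: relabel_def)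
    next
      case (3 a) show ?case by (rule range_eqI[of _ _ "Inl (Inr (Inl a))"]) (simp add: relabel_def)
    next
      case (4 a) show ?case by (rule range_eqI[of _ _ "Inr (Inr a)"]) (simp add: relabel_def)
    next
      case (5 a) show ?case by (rule range_eqI[of _ _ "Inl (Inr (Inr a))"]) (simp add: relabel_def)
    qed
    then show ?thesis by blast
  qed
  ultimately show ?thesis by (simp add: bij_def)
qed

context DE2 begin

lemma part1: "((\<lambda>e. Tinv e (br (dext_sc fg Om fh fa) (Tmap e x) (Tmap e y)))
              \<longlongrightarrow> br (contr_sc fg Om fh fa) x y) (at_right 0)"
  unfolding tendsto_fun_iff Tinv_br
proof
  fix k
  show "((\<lambda>e. \<Sum>a\<in>UNIV. \<Sum>b\<in>UNIV. x a * y b * (Tscale e a * Tscale e b / Tscale e k * dext_sc fg Om fh fa a b k))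
      \<longlongrightarrow> br (contr_sc fg Om fh fa) x y k) (at_right 0)"
    unfolding br_def
    by (intro tendsto_sum tendsto_mult_left key_sc)
qed

lemma part2: "((\<lambda>e. bform (dext_metric Om hf) (Tmap e x) (Tmap e y))
              \<longlongrightarrow> bform (contr_metric Om hf) x y) (at_right 0)"
proof -
  have "bform (contr_metric Om hf) x y = (\<Sum>a\<in>UNIV. \<Sum>b\<in>UNIV. x a * y b * contr_metric Om hf a b)"
    unfolding bform_def by (simp add: mult_ac)
  then show ?thesis unfolding bform_T
    by (simp only:) (intro tendsto_sum tendsto_mult_left key_m)
qed

end


theorem theorem5p1:
  fixes fg :: "'i::finite \<Rightarrow> 'i \<Rightarrow> 'i \<Rightarrow> real" and Om :: "'i \<Rightarrow> 'i \<Rightarrow> real"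
    and fh :: "'p::finite + 'q::finite \<Rightarrow> 'p + 'q \<Rightarrow> 'p + 'q \<Rightarrow> real"
    and fa :: "'p + 'q \<Rightarrow> 'i \<Rightarrow> 'i \<Rightarrow> real"
    and hf :: "'p + 'q \<Rightarrow> 'p + 'q \<Rightarrow> real"
  assumes data: "dext_data fg Om fh fa hf"
    and hat_subalg: "\<forall>a b c. fh (Inl a) (Inl b) (Inr c) = 0"
  shows
    "(\<forall>x y. ((\<lambda>e. Tinv e (br (dext_sc fg Om fh fa) (Tmap e x) (Tmap e y)))
              \<longlongrightarrow> br (contr_sc fg Om fh fa) x y) (at_right 0))
   \<and> (\<forall>x y. ((\<lambda>e. bform (dext_metric Om hf) (Tmap e x) (Tmap e y))
              \<longlongrightarrow> bform (contr_metric Om hf) x y) (at_right 0))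
   \<and> lie_sc (contr_sc fg Om fh fa)
   \<and> invariant_metric (contr_sc fg Om fh fa) (contr_metric Om hf)
   \<and> (\<exists>fa'. dext_data (dsum_sc fg (dzero_sc (\<lambda>_ _ _. 0)))
                       (dsum_metric Om (dzero_metric (\<lambda>_ _. 0)))
                       (\<lambda>a b c. fh (Inl a) (Inl b) (Inl c)) fa'
                       (\<lambda>a b. hf (Inl a) (Inl b))
         \<and> (\<forall>a b c. contr_sc fg Om fh fa (relabel a) (relabel b) (relabel c) =
              dext_sc (dsum_sc fg (dzero_sc (\<lambda>_ _ _. 0))) (dsum_metric Om (dzero_metric (\<lambda>_ _. 0)))
                      (\<lambda>a b c. fh (Inl a) (Inl b) (Inl c)) fa' a b c)
         \<and> (\<forall>a b. contr_metric Om hf (relabel a) (relabel b) =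
              dext_metric (dsum_metric Om (dzero_metric (\<lambda>_ _. 0))) (\<lambda>a b. hf (Inl a) (Inl b)) a b))"
proof -
  interpret D: DE2 fg Om fh fa hf
    by (intro DE2.intro DE.intro DE2_axioms.intro data hat_subalg)
  let ?fg2 = "dsum_sc fg (dzero_sc (\<lambda>(_::'q) (_::'q) (_::'q). 0::real))"
  let ?Om2 = "dsum_metric Om (dzero_metric (\<lambda>(_::'q) (_::'q). 0::real))"
  let ?fh2 = "\<lambda>a b c. fh (Inl a) (Inl b) (Inl c)"
  let ?hf2 = "\<lambda>a b. hf (Inl a) (Inl b)"
  have nd: "dext_data ?fg2 ?Om2 ?fh2 (fa2 fh fa) ?hf2" by (rule D.new_data)
  interpret N: DE ?fg2 ?Om2 ?fh2 "fa2 fh fa" ?hf2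
    by (rule DE.intro, rule nd)
  have T: "lie_sc (contr_sc fg Om fh fa) \<and> invariant_metric (contr_sc fg Om fh fa) (contr_metric Om hf)"
    by (rule transfer[OF relabel_bij _ _ N.dext_lie N.dext_metric_ok]) (simp_all add: D.relabel_sc D.relabel_metric)
  show ?thesis
    using D.part1 D.part2 T nd D.relabel_sc D.relabel_metric by blast
qed

end
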